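(* Let $G$ be a graph on $n$ vertices. Then $\mathcal{Z}^{\mathrm{TE}}_-(G)\cong K_n$ if and only if $\mathrm{Z}_-(G)=1$ and every singleton subset of $V(G)$ is a skew forcing set of $G$.
   Context: Skew forcing: vertices are colored blue or white; if any vertex $u$ (blue or white) has exactly one white neighbor $v$, then $u$ may force $v$ to become blue. A skew forcing set is a (possibly empty) set of initially blue vertices from which repeated application of this rule turns every vertex blue; $\mathrm{Z}_-(G)$ is the minimum size of a skew forcing set. $\mathcal{Z}^{\mathrm{TE}}_-(G)$ has as vertices the minimum skew forcing sets of $G$, with $S_1S_2$ an edge iff $S_1\setminus S_2=\{v_1\}$ and $S_2\setminus S_1=\{v_2\}$ for some vertices $v_1,v_2$. *)

theory Defs
  imports Main
begin

definition simple_graph :: "'a set \<Rightarrow> ('a \<Rightarrow> 'a \<Rightarrow> bool) \<Rightarrow> bool" where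
  "simple_graph V E \<longleftrightarrow> finite V \<and> (\<forall>u v. E u v \<longrightarrow> E v u)
     \<and> (\<forall>u. \<not> E u u) \<and> (\<forall>u v. E u v \<longrightarrow> u \<in> V \<and> v \<in> V)"

definition skew_force_step :: "'a set \<Rightarrow> ('a \<Rightarrow> 'a \<Rightarrow> bool) \<Rightarrow> 'a set \<Rightarrow> 'a set \<Rightarrow> bool" where
  "skew_force_step V E B B' \<longleftrightarrow>
     (\<exists>u\<in>V. \<exists>v. {w \<in> V. E u w \<and> w \<notin> B} = {v} \<and> B' = insert v B)"

definition skew_forcing_set :: "'a set \<Rightarrow> ('a \<Rightarrow> 'a \<Rightarrow> bool) \<Rightarrow> 'a set \<Rightarrow> bool" where
  "skew_forcing_set V E S \<longleftrightarrow> S \<subseteq> V \<and> (skew_force_step V E)\<^sup>*\<^sup>* S V"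

definition skew_zero_forcing_number :: "'a set \<Rightarrow> ('a \<Rightarrow> 'a \<Rightarrow> bool) \<Rightarrow> nat" where
  "skew_zero_forcing_number V E = (LEAST k. \<exists>S. skew_forcing_set V E S \<and> card S = k)"

definition min_skew_forcing_sets :: "'a set \<Rightarrow> ('a \<Rightarrow> 'a \<Rightarrow> bool) \<Rightarrow> 'a set set" where
  "min_skew_forcing_sets V E =
     {S. skew_forcing_set V E S \<and> card S = skew_zero_forcing_number V E}"

text \<open>The token exchange skew forcing graph: vertices are minimum skew forcing sets.\<close>
definition TE_adj :: "'a set \<Rightarrow> 'a set \<Rightarrow> bool" where
  "TE_adj S1 S2 \<longleftrightarrow> (\<exists>v1 v2. S1 - S2 = {v1} \<and> S2 - S1 = {v2})"

definition complete_adj :: "nat \<Rightarrow> nat \<Rightarrow> bool" where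
  "complete_adj i j \<longleftrightarrow> i \<noteq> j"

definition graph_iso :: "'a set \<Rightarrow> ('a \<Rightarrow> 'a \<Rightarrow> bool) \<Rightarrow> 'b set \<Rightarrow> ('b \<Rightarrow> 'b \<Rightarrow> bool) \<Rightarrow> bool" where
  "graph_iso V1 E1 V2 E2 \<longleftrightarrow>
     (\<exists>f. bij_betw f V1 V2 \<and> (\<forall>x\<in>V1. \<forall>y\<in>V1. E1 x y \<longleftrightarrow> E2 (f x) (f y)))"

end

theory Submission
  imports Defs
begin
lemma TE_card:
  assumes "finite A" "finite B" "card A = card B" "TE_adj A B"
  shows "card (A \<inter> B) = card A - 1" "card (A \<union> B) = card A + 1" "card A \<ge> 1"
proof -
  obtain v1 v2 where h: "A - B = {v1}" "B - A = {v2}" using assms(4) unfolding TE_adj_def by blast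
  have A: "A = (A \<inter> B) \<union> {v1}" using h by blast
  have "card A = card (A \<inter> B) + 1"
  proof -
    have "v1 \<notin> A \<inter> B" using h by blast
    then have "card (insert v1 (A \<inter> B)) = card (A \<inter> B) + 1" using assms(1) by simp
    moreover have "insert v1 (A \<inter> B) = A" using h by blast
    ultimately show ?thesis by simp
  qed
  then show "card (A \<inter> B) = card A - 1" "card A \<ge> 1" by auto
  have "A \<union> B = A \<union> {v2}" using h by blast
  moreover have "v2 \<notin> A" using h by blast
  ultimately show "card (A \<union> B) = card A + 1" using assms(1) by simp
qed
lemma family_k1:
  assumes fin: "finite V"
    and sub: "\<And>C. C \<in> F \<Longrightarrow> C \<subseteq> V \<and> card C = k"
    and adj: "\<And>A B. A \<in> F \<Longrightarrow> B \<in> F \<Longrightarrow> A \<noteq> B \<Longrightarrow> TE_adj A B"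
    and cF: "card F = card V" and kn: "k + 2 \<le> card V"
  shows "k = 1"
proof -
  have finF: "finite F" using cF kn card.infinite by fastforce
  have finC: "\<And>C. C \<in> F \<Longrightarrow> finite C" using sub fin finite_subset by blast
  have "card F \<ge> 2" using cF kn by simp
  then obtain A B where AB: "A \<in> F" "B \<in> F" "A \<noteq> B"
    using card_le_Suc0_iff_eq[OF finF] by (metis One_nat_def not_less_eq_eq numeral_2_eq_2)
  define D where "D = A \<inter> B"
  define U where "U = A \<union> B"
  have tAB: "TE_adj A B" using adj AB by blast
  have cA: "card A = k" "card B = k" using sub AB by auto
  have cD: "card D = k - 1" and cU: "card U = k + 1" and k1: "k \<ge> 1"
    using TE_card[OF finC[OF AB(1)] finC[OF AB(2)] _ tAB] cA unfolding D_def U_def by auto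
  have finU: "finite U" using finC AB U_def by auto
  have finD: "finite D" using finC AB D_def by auto
  have key: "C = insert y D" if C: "C \<in> F" "y \<in> C" "y \<notin> U" for C y
  proof -
    have "C \<noteq> A" "C \<noteq> B" using C U_def by auto
    then have t1: "TE_adj C A" and t2: "TE_adj C B" using adj C AB by auto
    obtain c1 a1 where "C - A = {c1}" using t1 unfolding TE_adj_def by blast
    moreover have "y \<in> C - A" using C U_def by auto
    ultimately have s1: "C \<subseteq> insert y A" by auto
    obtain c2 a2 where "C - B = {c2}" using t2 unfolding TE_adj_def by blast
    moreover have "y \<in> C - B" using C U_def by auto
    ultimately have s2: "C \<subseteq> insert y B" by auto
    have ss: "C \<subseteq> insert y D" using s1 s2 D_def by blast
    have "y \<notin> D" using C U_def D_def by auto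
    then have "card (insert y D) = k" using cD k1 finD by simp
    moreover have "card C = k" using sub C by auto
    ultimately show ?thesis using ss card_subset_eq finD by (metis finite_insert)
  qed
  show ?thesis
  proof (cases "\<forall>C\<in>F. C \<subseteq> U")
    case True
    have "F \<subseteq> (\<lambda>x. U - {x}) ` U"
    proof
      fix C assume C: "C \<in> F"
      have CU: "C \<subseteq> U" using True C by auto
      have "card C = k" using sub C by auto
      then have "card (U - C) = 1" using CU cU finU
        by (simp add: card_Diff_subset finite_subset)
      then obtain x where "U - C = {x}" using card_1_singletonE by blast
      then have "C = U - {x}" "x \<in> U" using CU by blast+
      then show "C \<in> (\<lambda>x. U - {x}) ` U" by blast
    qed
    then have "card F \<le> card U" using finU
      by (meson card_image_le card_mono finite_imageI le_trans)
    then show ?thesis using cF cU kn by simp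
  next
    case False
    then obtain C0 y0 where C0: "C0 \<in> F" "y0 \<in> C0" "y0 \<notin> U" by blast
    have C0D: "C0 = insert y0 D" using key C0 by blast
    have DC: "D \<subseteq> C" if C: "C \<in> F" for C
    proof (cases "C \<subseteq> U")
      case True
      then have "C \<noteq> C0" using C0 by auto
      then have t: "TE_adj C C0" using adj C C0 by auto
      have "card (C \<inter> C0) = k - 1"
        using TE_card[OF finC[OF C] finC[OF C0(1)] _ t] sub C C0 by auto
      moreover have "C \<inter> C0 \<subseteq> D" using True C0D C0 by blast
      ultimately have "C \<inter> C0 = D" using cD finD card_subset_eq by metis
      then show ?thesis by blast
    next
      case False
      then obtain y where "y \<in> C" "y \<notin> U" by blast
      then show ?thesis using key C by blast
    qed
    have "F \<subseteq> (\<lambda>x. insert x D) ` (V - D)"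
    proof
      fix C assume C: "C \<in> F"
      have "card (C - D) = 1" using DC[OF C] sub[OF C] cD k1 finD
        by (simp add: card_Diff_subset)
      then obtain x where x: "C - D = {x}" using card_1_singletonE by blast
      then have "C = insert x D" using DC[OF C] by blast
      moreover have "x \<in> V - D" using x sub[OF C] by blast
      ultimately show "C \<in> (\<lambda>x. insert x D) ` (V - D)" by blast
    qed
    then have "card F \<le> card (V - D)" using fin
      by (meson card_image_le card_mono finite_imageI finite_Diff le_trans)
    moreover have "D \<subseteq> V" using sub AB D_def by blast
    ultimately have "card V \<le> card V - (k - 1)" using cF cD fin
      by (simp add: card_Diff_subset finite_subset)
    then show ?thesis using k1 kn by linarith
  qed
qed
lemma Z_attained:
  assumes "simple_graph V E"
  shows "\<exists>S. skew_forcing_set V E S \<and> card S = skew_zero_forcing_number V E"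
proof -
  have "skew_forcing_set V E V" unfolding skew_forcing_set_def by simp
  then have "\<exists>k S. skew_forcing_set V E S \<and> card S = k" by blast
  then show ?thesis unfolding skew_zero_forcing_number_def by (rule LeastI_ex)
qed

lemma Z_le:
  assumes "skew_forcing_set V E S"
  shows "skew_zero_forcing_number V E \<le> card S"
  unfolding skew_zero_forcing_number_def using assms by (intro Least_le) blast

lemma edge_forcing:
  assumes g: "simple_graph V E" and e: "E u v"
  shows "skew_forcing_set V E (V - {u, v})"
proof -
  have uv: "u \<in> V" "v \<in> V" "u \<noteq> v" "E v u" using g e unfolding simple_graph_def by metis+
  have s1: "skew_force_step V E (V - {u, v}) (V - {u})"
    unfolding skew_force_step_def
  proof (intro bexI[of _ u] exI[of _ v] conjI)
    show "{w \<in> V. E u w \<and> w \<notin> V - {u, v}} = {v}" using uv e g unfolding simple_graph_def by auto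
    show "V - {u} = insert v (V - {u, v})" using uv by auto
  qed (use uv in auto)
  have s2: "skew_force_step V E (V - {u}) V"
    unfolding skew_force_step_def
  proof (intro bexI[of _ v] exI[of _ u] conjI)
    show "{w \<in> V. E v w \<and> w \<notin> V - {u}} = {u}" using uv by auto
    show "V = insert u (V - {u})" using uv by auto
  qed (use uv in auto)
  show ?thesis unfolding skew_forcing_set_def using s1 s2 by auto
qed

lemma no_edge_forcing:
  assumes "\<forall>u v. \<not> E u v" and "skew_forcing_set V E S"
  shows "S = V"
proof -
  have ns: "\<not> skew_force_step V E B B'" for B B'
    using assms(1) unfolding skew_force_step_def by auto
  have "(skew_force_step V E)\<^sup>*\<^sup>* S V" using assms(2) unfolding skew_forcing_set_def by auto
  then show ?thesis by (cases rule: converse_rtranclpE) (use ns in auto)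
qed

theorem proposition5p12:
  fixes V :: "'a set" and E :: "'a \<Rightarrow> 'a \<Rightarrow> bool" and n :: nat
  assumes "simple_graph V E" and "card V = n"
  shows "graph_iso (min_skew_forcing_sets V E) TE_adj {0..<n} complete_adj \<longleftrightarrow>
         (skew_zero_forcing_number V E = 1 \<and> (\<forall>v\<in>V. skew_forcing_set V E {v}))"
proof
  define F where "F = min_skew_forcing_sets V E"
  define Z where "Z = skew_zero_forcing_number V E"
  have fin: "finite V" using assms(1) unfolding simple_graph_def by auto
  assume "graph_iso (min_skew_forcing_sets V E) TE_adj {0..<n} complete_adj"
  then obtain f where bij: "bij_betw f F {0..<n}"
    and adjf: "\<forall>x\<in>F. \<forall>y\<in>F. TE_adj x y \<longleftrightarrow> complete_adj (f x) (f y)"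
    unfolding graph_iso_def F_def by blast
  have cF: "card F = n" using bij_betw_same_card[OF bij] by simp
  have adj: "TE_adj A B" if "A \<in> F" "B \<in> F" "A \<noteq> B" for A B
    using adjf that bij unfolding complete_adj_def bij_betw_def inj_on_def by metis
  have memF: "S \<in> F \<longleftrightarrow> skew_forcing_set V E S \<and> card S = Z" for S
    unfolding F_def Z_def min_skew_forcing_sets_def by simp
  obtain S0 where S0: "skew_forcing_set V E S0" "card S0 = Z" using Z_attained[OF assms(1)] Z_def by blast
  have k1: "Z = 1"
  proof (cases "\<exists>u v. E u v")
    case False
    then have "F = {V}" using memF S0 no_edge_forcing by (metis (no_types, lifting) empty_iff insertCI subsetI subset_singletonD equalityI) 
    then show ?thesis using S0 no_edge_forcing False cF assms(2) by auto
  next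
    case True
    then obtain u v where e: "E u v" by blast
    have uv: "u \<in> V" "v \<in> V" "u \<noteq> v" using assms(1) e unfolding simple_graph_def by metis+
    have "Z \<le> card (V - {u, v})" using Z_le[OF edge_forcing[OF assms(1) e]] Z_def by simp
    also have "\<dots> = n - 2" using uv fin assms(2) by (simp add: card_Diff_subset)
    finally have "Z \<le> n - 2" .
    moreover have "2 \<le> n" using uv fin assms(2)
      by (metis card_2_iff card_mono empty_subsetI insert_subset)
    ultimately have kb: "Z + 2 \<le> card V" using assms(2) by simp
    show ?thesis
    proof (rule family_k1[where V=V and F=F and k=Z, OF fin])
      show "C \<subseteq> V \<and> card C = Z" if "C \<in> F" for C using that memF unfolding skew_forcing_set_def by blast
    qed (use adj cF assms(2) kb in auto)
  qed
  have "F \<subseteq> (\<lambda>x. {x}) ` V"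
  proof
    fix C assume "C \<in> F"
    then have "C \<subseteq> V" "card C = 1" using memF k1 unfolding skew_forcing_set_def by auto
    then show "C \<in> (\<lambda>x. {x}) ` V" by (metis card_1_singletonE image_iff insert_subset)
  qed
  moreover have "card ((\<lambda>x. {x}) ` V) = n" using assms(2) by (simp add: card_image)
  ultimately have "F = (\<lambda>x. {x}) ` V" using cF fin by (simp add: card_subset_eq)
  then show "skew_zero_forcing_number V E = 1 \<and> (\<forall>v\<in>V. skew_forcing_set V E {v})"
    using k1 memF Z_def by auto
next
  define F where "F = min_skew_forcing_sets V E"
  have fin: "finite V" using assms(1) unfolding simple_graph_def by auto
  assume h: "skew_zero_forcing_number V E = 1 \<and> (\<forall>v\<in>V. skew_forcing_set V E {v})"
  have FV: "F = (\<lambda>x. {x}) ` V"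
  proof
    show "F \<subseteq> (\<lambda>x. {x}) ` V"
    proof
      fix C assume "C \<in> F"
      then have "C \<subseteq> V" "card C = 1" using h unfolding F_def min_skew_forcing_sets_def skew_forcing_set_def by auto
      then show "C \<in> (\<lambda>x. {x}) ` V" by (metis card_1_singletonE image_iff insert_subset)
    qed
    show "(\<lambda>x. {x}) ` V \<subseteq> F" using h unfolding F_def min_skew_forcing_sets_def by auto
  qed
  obtain g where g: "bij_betw g {0..<n} V" using ex_bij_betw_nat_finite[OF fin] assms(2) by blast
  define h' where "h' = inv_into {0..<n} g"
  have bh: "bij_betw h' V {0..<n}" using g bij_betw_inv_into h'_def by blast
  have bt: "bij_betw the_elem F V" unfolding FV
    by (rule bij_betw_byWitness[where f'="\<lambda>x. {x}"]) auto
  have b: "bij_betw (h' \<circ> the_elem) F {0..<n}" using bij_betw_trans[OF bt bh] .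
  have "\<forall>x\<in>F. \<forall>y\<in>F. TE_adj x y \<longleftrightarrow> complete_adj ((h' \<circ> the_elem) x) ((h' \<circ> the_elem) y)"
  proof (intro ballI)
    fix x y assume xy: "x \<in> F" "y \<in> F"
    then obtain a b where ab: "x = {a}" "y = {b}" "a \<in> V" "b \<in> V" using FV by auto
    have "TE_adj {a} {b} \<longleftrightarrow> a \<noteq> b" unfolding TE_adj_def by auto
    moreover have "h' a = h' b \<longleftrightarrow> a = b" using bh ab unfolding bij_betw_def inj_on_def by auto
    ultimately show "TE_adj x y \<longleftrightarrow> complete_adj ((h' \<circ> the_elem) x) ((h' \<circ> the_elem) y)"
      using ab unfolding complete_adj_def by auto
  qed
  then show "graph_iso (min_skew_forcing_sets V E) TE_adj {0..<n} complete_adj"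
    unfolding graph_iso_def F_def[symmetric] using b by blast
qed
end
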